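(* The action of $\mathrm{PSL}(2,\mathbb{R})$ on $D$ by biholomorphisms induces an isomorphism $\mathcal D:\mathfrak{psl}(2,\mathbb{R})\to\ker\bar\partial_2$, and $\mathcal D$ is orientation-reversing.
   Context: $D$ is the closed unit disk. $F^2\subset\underline{\mathbb{C}}|_{\partial D}$ is the totally real line subbundle with fibres $F^2_z=z\mathbb{R}$, oriented by the frame $z$ (with the induced spin structure); $\bar\partial_2$ is the Cauchy–Riemann operator on sections of $\underline{\mathbb{C}}\to D$ with boundary values in $F^2$ (identified with $(TD,T\partial D)$), with vanishing cokernel, and $\ker\bar\partial_2$ is oriented by the canonical orientation of the determinant line of a spin Riemann–Hilbert pair (Fukaya–Oh–Ohta–Ono / Solomon convention; for rank one pairs of Maslov index $2$, evaluation at an interior point and at a boundary point, $\ker\to E_0\oplus F_1$, is orientation-preserving for the complex orientation on $E_0$). $\mathcal D(A)$ is the vector field $z\mapsto\frac{d}{dt}|_{t=0}\exp(tA)\cdot z$. $\mathrm{PSL}(2,\mathbb{R})$ is oriented so that, for three distinct points $z_0,z_1,z_2\in\partial D$ in anticlockwise order, the embedding $g\mapsto(g z_0,g z_1,g z_2)\in(\partial D)^3$ is orientation-reversing, $\partial D$ being oriented counterclockwise. *)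

theory Defs
  imports "HOL-Analysis.Analysis"
begin

type_synonym mat2 = "real^2^2"

definition psl2 :: "mat2 set" where
  "psl2 = {A. trace A = 0}"

fun mpow :: "mat2 \<Rightarrow> nat \<Rightarrow> mat2" where
  "mpow A 0 = mat 1"
| "mpow A (Suc n) = A ** mpow A n"

definition mexp :: "mat2 \<Rightarrow> mat2" where
  "mexp A = (\<Sum>n. (1 / fact n) *\<^sub>R mpow A n)"

text \<open>A real matrix g = [[a,b],[c,d]] acts on the upper half plane by Moebius
 transformations; transported to the disk by the Cayley transform w -> (w - i)/(w + i)
 it acts by the Moebius transformation of the complex matrix C g adj(C),
 C = [[1,-i],[1,i]].\<close>

definition disk_act :: "mat2 \<Rightarrow> complex \<Rightarrow> complex" where
  "disk_act g z =
    (let a = complex_of_real (g$1$1); b = complex_of_real (g$1$2);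
         c = complex_of_real (g$2$1); d = complex_of_real (g$2$2);
         m11 = \<i>*a + c - b + \<i>*d; m12 = \<i>*a + c + b - \<i>*d;
         m21 = \<i>*a - c - b - \<i>*d; m22 = \<i>*a - c + b + \<i>*d
     in (m11 * z + m12) / (m21 * z + m22))"

definition infact :: "mat2 \<Rightarrow> complex \<Rightarrow> complex" where
  "infact A z = vector_derivative (\<lambda>t. disk_act (mexp (t *\<^sub>R A)) z) (at 0)"

text \<open>Sections of the trivial line bundle over the closed unit disk, holomorphic in
 the interior, continuous up to the boundary, with boundary values in F^2_z = z R.\<close>

definition ker_dbar2 :: "(complex \<Rightarrow> complex) set" where
  "ker_dbar2 = {\<xi>. continuous_on (cball 0 1) \<xi> \<and> \<xi> holomorphic_on ball 0 1 \<and>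
                   (\<forall>z. cmod z = 1 \<longrightarrow> \<xi> z / z \<in> \<real>)}"

text \<open>Identification of (TD, T dD) (T dD oriented counterclockwise, frame i z) with
 (C, F^2) (F^2 oriented by the frame z): multiplication by -i.\<close>

definition tangent_to_F2 :: "(complex \<Rightarrow> complex) \<Rightarrow> (complex \<Rightarrow> complex)" where
  "tangent_to_F2 v = (\<lambda>z. - \<i> * v z)"

definition DD :: "mat2 \<Rightarrow> (complex \<Rightarrow> complex)" where
  "DD A = tangent_to_F2 (infact A)"

definition det3 :: "(nat \<Rightarrow> nat \<Rightarrow> real) \<Rightarrow> real" where
  "det3 M = M 0 0 * (M 1 1 * M 2 2 - M 1 2 * M 2 1)
          - M 0 1 * (M 1 0 * M 2 2 - M 1 2 * M 2 0)
          + M 0 2 * (M 1 0 * M 2 1 - M 1 1 * M 2 0)"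

definition anticlockwise3 :: "complex \<Rightarrow> complex \<Rightarrow> complex \<Rightarrow> bool" where
  "anticlockwise3 z0 z1 z2 \<longleftrightarrow> (\<exists>\<theta> s1 s2. 0 < s1 \<and> s1 < s2 \<and> s2 < 2 * pi \<and>
       z0 = cis \<theta> \<and> z1 = cis (\<theta> + s1) \<and> z2 = cis (\<theta> + s2))"

text \<open>Orientation of psl(2,R) = T_e PSL(2,R): (A0,A1,A2) is a positive basis iff its image
 under the differential at e of g -> (g z0, g z1, g z2) is a negative basis of
 T(dD)^3, each T_{z_k} dD oriented counterclockwise (coordinate: coefficient of i z_k).\<close>

definition psl_pos :: "complex \<Rightarrow> complex \<Rightarrow> complex \<Rightarrow> mat2 \<Rightarrow> mat2 \<Rightarrow> mat2 \<Rightarrow> bool" where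
  "psl_pos z0 z1 z2 A0 A1 A2 \<longleftrightarrow>
     (let z = (\<lambda>k::nat. if k = 0 then z0 else if k = 1 then z1 else z2);
          A = (\<lambda>j::nat. if j = 0 then A0 else if j = 1 then A1 else A2)
      in det3 (\<lambda>k j. Im (infact (A j) (z k) / z k)) < 0)"

text \<open>Canonical orientation of ker dbar_2: evaluation at an interior point p and a boundary
 point q, ker -> C + F^2_q, is orientation preserving (complex orientation on C,
 F^2_q = q R oriented by q).\<close>

definition ker_pos :: "complex \<Rightarrow> complex \<Rightarrow> (complex \<Rightarrow> complex) \<Rightarrow> (complex \<Rightarrow> complex)
                        \<Rightarrow> (complex \<Rightarrow> complex) \<Rightarrow> bool" where
  "ker_pos p q \<xi>0 \<xi>1 \<xi>2 \<longleftrightarrow>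
     (let \<xi> = (\<lambda>j::nat. if j = 0 then \<xi>0 else if j = 1 then \<xi>1 else \<xi>2);
          row = (\<lambda>k j. if k = 0 then Re (\<xi> j p) else if k = 1 then Im (\<xi> j p)
                       else Re (\<xi> j q / q))
      in det3 row > 0)"

end

theory Submission
  imports Defs "HOL-Complex_Analysis.Complex_Analysis"
begin


lemma mpow_scale: "mpow (t *\<^sub>R A) n = t^n *\<^sub>R mpow A n"
  by (induct n) (simp_all add: matrix_scalar_ac scalar_matrix_assoc mult.commute)

lemma mpow_one: "mpow A 1 = A"
  by simp

definition NA :: "mat2 \<Rightarrow> real" where
  "NA A = (\<Sum>k\<in>UNIV. \<Sum>l\<in>UNIV. \<bar>A$k$l\<bar>)"

lemma NA_nonneg: "0 \<le> NA A"
  unfolding NA_def by (intro sum_nonneg) auto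

lemma row_le_NA: "(\<Sum>k\<in>UNIV. \<bar>A$i$k\<bar>) \<le> NA A"
proof -
  have "(\<Sum>k\<in>UNIV. \<bar>A$i$k\<bar>) \<le> (\<Sum>i'\<in>UNIV. \<Sum>k\<in>UNIV. \<bar>A$i'$k\<bar>)"
    by (rule member_le_sum) (auto intro: sum_nonneg)
  then show ?thesis unfolding NA_def .
qed

lemma mpow_entry_bound: "\<bar>mpow A n $ i $ j\<bar> \<le> NA A ^ n"
proof (induct n arbitrary: i j)
  case 0
  then show ?case by (simp add: mat_def)
next
  case (Suc n)
  have "\<bar>mpow A (Suc n) $ i $ j\<bar> = \<bar>\<Sum>k\<in>UNIV. A$i$k * mpow A n $ k $ j\<bar>"
    by (simp add: matrix_matrix_mult_def)
  also have "\<dots> \<le> (\<Sum>k\<in>UNIV. \<bar>A$i$k\<bar> * NA A ^ n)"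
    by (rule order_trans[OF sum_abs]) (auto intro!: sum_mono simp: abs_mult intro: mult_left_mono Suc)
  also have "\<dots> = (\<Sum>k\<in>UNIV. \<bar>A$i$k\<bar>) * NA A ^ n"
    by (simp add: sum_distrib_right)
  also have "\<dots> \<le> NA A * NA A ^ n"
    by (rule mult_right_mono[OF row_le_NA]) (simp add: NA_nonneg)
  finally show ?case by simp
qed

lemma norm_mat2_le: "norm (M::mat2) \<le> (\<Sum>i\<in>UNIV. \<Sum>j\<in>UNIV. \<bar>M$i$j\<bar>)"
proof -
  have "norm M \<le> (\<Sum>i\<in>UNIV. norm (M$i))"
    unfolding norm_vec_def by (rule L2_set_le_sum) auto
  also have "\<dots> \<le> (\<Sum>i\<in>UNIV. \<Sum>j\<in>UNIV. \<bar>M$i$j\<bar>)"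
    by (intro sum_mono norm_le_l1_cart)
  finally show ?thesis .
qed

lemma norm_mat2_le_bound:
  assumes "\<And>i j. \<bar>(M::mat2)$i$j\<bar> \<le> X" shows "norm M \<le> 4 * X"
proof -
  have "norm M \<le> (\<Sum>i\<in>UNIV. \<Sum>j\<in>UNIV. \<bar>M$i$j\<bar>)" by (rule norm_mat2_le)
  also have "\<dots> \<le> (\<Sum>i\<in>(UNIV::2 set). \<Sum>j\<in>(UNIV::2 set). X)"
    by (intro sum_mono assms)
  also have "\<dots> = 4 * X" by simp
  finally show ?thesis .
qed

lemma mexp_term_bound:
  "norm ((1 / fact n) *\<^sub>R mpow (t *\<^sub>R A) n) \<le> 4 * (inverse (fact n) * (\<bar>t\<bar> * NA A) ^ n)"
proof (rule norm_mat2_le_bound)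
  fix i j
  have "\<bar>((1 / fact n) *\<^sub>R mpow (t *\<^sub>R A) n) $ i $ j\<bar> = inverse (fact n) * \<bar>t\<bar>^n * \<bar>mpow A n $ i $ j\<bar>"
    by (simp add: mpow_scale abs_mult power_abs divide_inverse)
  also have "\<dots> \<le> inverse (fact n) * \<bar>t\<bar>^n * NA A ^ n"
    by (intro mult_left_mono mpow_entry_bound) auto
  finally show "\<bar>((1 / fact n) *\<^sub>R mpow (t *\<^sub>R A) n) $ i $ j\<bar> \<le> inverse (fact n) * (\<bar>t\<bar> * NA A) ^ n"
    by (simp add: power_mult_distrib mult.assoc)
qed

lemma mexp_summable: "summable (\<lambda>n. (1 / fact n) *\<^sub>R mpow (t *\<^sub>R A) n)"
  by (rule summable_comparison_test'[OF summable_mult[OF summable_exp] mexp_term_bound])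

lemma bl_entry: "bounded_linear (\<lambda>M::mat2. M $ i $ j)"
  using bounded_linear_compose[OF bounded_linear_vec_nth bounded_linear_vec_nth] .

lemma mexp_entry: "mexp (t *\<^sub>R A) $ i $ j = (\<Sum>n. (mpow A n $ i $ j / fact n) * t ^ n)"
proof -
  have "mexp (t *\<^sub>R A) $ i $ j = (\<Sum>n. ((1 / fact n) *\<^sub>R mpow (t *\<^sub>R A) n) $ i $ j)"
    unfolding mexp_def by (rule bounded_linear.suminf[OF bl_entry mexp_summable])
  also have "\<dots> = (\<Sum>n. (mpow A n $ i $ j / fact n) * t ^ n)"
    by (rule suminf_cong) (simp add: mpow_scale)
  finally show ?thesis .
qed

lemma entry_series_summable: "summable (\<lambda>n. (mpow A n $ i $ j / fact n) * y ^ n)"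
proof (rule summable_comparison_test'[OF summable_exp[of "\<bar>y\<bar> * NA A"]])
  fix n :: nat
  show "norm (mpow A n $ i $ j / fact n * y ^ n) \<le> inverse (fact n) * (\<bar>y\<bar> * NA A) ^ n"
    using mpow_entry_bound[of A n i j]
    by (simp add: abs_mult power_abs power_mult_distrib divide_inverse mult_ac mult_left_mono)
qed

lemma mexp_entry_deriv: "((\<lambda>t. mexp (t *\<^sub>R A) $ i $ j) has_real_derivative A $ i $ j) (at 0)"
proof -
  have "((\<lambda>t. \<Sum>n. (mpow A n $ i $ j / fact n) * t ^ n) has_real_derivative
          (\<Sum>n. diffs (\<lambda>n. mpow A n $ i $ j / fact n) n * 0 ^ n)) (at 0)"
    by (rule termdiffs_strong_converges_everywhere[OF entry_series_summable])
  moreover have "(\<Sum>n. diffs (\<lambda>n. mpow A n $ i $ j / fact n) n * 0 ^ n) = A $ i $ j"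
    unfolding powser_zero by (simp add: diffs_def)
  ultimately show ?thesis by (simp add: mexp_entry)
qed

lemma mpow_zero: "n > 0 \<Longrightarrow> mpow 0 n = 0"
  by (cases n) simp_all

lemma mexp_zero_entry: "mexp (0 *\<^sub>R A) = mat 1"
proof -
  have "mexp (0 *\<^sub>R A) = (\<Sum>n\<in>{0}. (1 / fact n) *\<^sub>R mpow (0 *\<^sub>R A) n)"
    unfolding mexp_def by (rule suminf_finite) (auto simp: mpow_zero)
  then show ?thesis by simp
qed



lemma mexp_zero: "mexp 0 = mat 1"
  using mexp_zero_entry[of A] by simp

lemma vd_quot:
  fixes f g :: "real \<Rightarrow> complex"
  assumes f: "(f has_vector_derivative f') (at 0)" and g: "(g has_vector_derivative g') (at 0)"
    and g0: "g 0 \<noteq> 0"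
  shows "((\<lambda>t. f t / g t) has_vector_derivative (f' * g 0 - f 0 * g') / (g 0)^2) (at 0)"
proof -
  have "((inverse \<circ> g) has_vector_derivative (g' * (- (inverse (g 0) ^ Suc (Suc 0))))) (at 0)"
    by (rule field_vector_diff_chain_at[OF g DERIV_inverse[OF g0]])
  then have gi: "((\<lambda>t. inverse (g t)) has_vector_derivative (g' * (- (inverse (g 0) ^ Suc (Suc 0))))) (at 0)"
    by (simp add: o_def)
  have "((\<lambda>t. f t * inverse (g t)) has_vector_derivative
      (f 0 * (g' * (- (inverse (g 0) ^ Suc (Suc 0)))) + f' * inverse (g 0))) (at 0)"
    by (rule has_vector_derivative_mult[OF f gi])
  moreover have "f 0 * (g' * (- (inverse (g 0) ^ Suc (Suc 0)))) + f' * inverse (g 0)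
     = (f' * g 0 - f 0 * g') / (g 0)^2"
    using g0 by (simp add: field_simps power2_eq_square)
  ultimately show ?thesis by (simp add: divide_inverse)
qed

lemma entry_vd: "((\<lambda>t. complex_of_real (mexp (t *\<^sub>R A) $ i $ j)) has_vector_derivative
   complex_of_real (A $ i $ j)) (at 0)"
  by (rule has_vector_derivative_of_real[OF mexp_entry_deriv])

lemma infact_formula:
  "infact A z =
    (let a = complex_of_real (A$1$1); b = complex_of_real (A$1$2);
         c = complex_of_real (A$2$1); d = complex_of_real (A$2$2)
     in ((2*c - 2*b)*z + (\<i>*a+c+b-\<i>*d) - (\<i>*a-c-b-\<i>*d)*z^2)/(2*\<i>))"
proof -
  define e where "e i j t = complex_of_real (mexp (t *\<^sub>R A) $ i $ j)" for i j t
  have ed: "(e i j has_vector_derivative complex_of_real (A $ i $ j)) (at 0)" for i j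
    unfolding e_def by (rule entry_vd)
  have e0: "e i j 0 = complex_of_real (mat 1 $ i $ j)" for i j
    by (simp add: e_def mexp_zero)
  define N where "N t = (\<i>*e 1 1 t + e 2 1 t - e 1 2 t + \<i>*e 2 2 t) * z + (\<i>*e 1 1 t + e 2 1 t + e 1 2 t - \<i>*e 2 2 t)" for t
  define D where "D t = (\<i>*e 1 1 t - e 2 1 t - e 1 2 t - \<i>*e 2 2 t) * z + (\<i>*e 1 1 t - e 2 1 t + e 1 2 t + \<i>*e 2 2 t)" for t
  let ?a = "complex_of_real (A$1$1)" and ?b = "complex_of_real (A$1$2)"
  let ?c = "complex_of_real (A$2$1)" and ?d = "complex_of_real (A$2$2)"
  have Nd: "(N has_vector_derivative ((\<i>*?a + ?c - ?b + \<i>*?d) * z + (\<i>*?a + ?c + ?b - \<i>*?d))) (at 0)"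
    unfolding N_def by (rule has_vector_derivative_add has_vector_derivative_diff has_vector_derivative_mult_left has_vector_derivative_mult_right ed)+
  have Dd: "(D has_vector_derivative ((\<i>*?a - ?c - ?b - \<i>*?d) * z + (\<i>*?a - ?c + ?b + \<i>*?d))) (at 0)"
    unfolding D_def by (rule has_vector_derivative_add has_vector_derivative_diff has_vector_derivative_mult_left has_vector_derivative_mult_right ed)+
  have N0: "N 0 = 2*\<i>*z" by (simp add: N_def e0 mat_def)
  have D0: "D 0 = 2*\<i>" by (simp add: D_def e0 mat_def)
  have eq: "(\<lambda>t. disk_act (mexp (t *\<^sub>R A)) z) = (\<lambda>t. N t / D t)"
    by (simp add: disk_act_def Let_def N_def D_def e_def fun_eq_iff)
  have "((\<lambda>t. N t / D t) has_vector_derivative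
     (((\<i>*?a + ?c - ?b + \<i>*?d) * z + (\<i>*?a + ?c + ?b - \<i>*?d)) * D 0 - N 0 *
       ((\<i>*?a - ?c - ?b - \<i>*?d) * z + (\<i>*?a - ?c + ?b + \<i>*?d))) / (D 0)^2) (at 0)"
    by (rule vd_quot[OF Nd Dd]) (simp add: D0)
  then have "infact A z = (((\<i>*?a + ?c - ?b + \<i>*?d) * z + (\<i>*?a + ?c + ?b - \<i>*?d)) * D 0 - N 0 *
       ((\<i>*?a - ?c - ?b - \<i>*?d) * z + (\<i>*?a - ?c + ?b + \<i>*?d))) / (D 0)^2"
    unfolding infact_def eq by (rule vector_derivative_at)
  also have "\<dots> = ((2*?c - 2*?b)*z + (\<i>*?a+?c+?b-\<i>*?d) - (\<i>*?a-?c-?b-\<i>*?d)*z^2)/(2*\<i>)"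
    unfolding N0 D0 by (simp add: field_simps power2_eq_square)
  finally show ?thesis by (simp add: Let_def)
qed



definition u1 :: "mat2 \<Rightarrow> real" where "u1 A = A$2$1 - A$1$2"
definition u2 :: "mat2 \<Rightarrow> real" where "u2 A = A$2$1 + A$1$2"
definition u3 :: "mat2 \<Rightarrow> real" where "u3 A = A$1$1 - A$2$2"

lemma DD_formula: "DD A z = -(of_real (u1 A) * z + (of_real (u2 A) + \<i> * of_real (u3 A))/2
   + (of_real (u2 A) - \<i> * of_real (u3 A)) * z^2 / 2)"
  unfolding DD_def tangent_to_F2_def infact_formula u1_def u2_def u3_def Let_def
  by (simp add: field_simps power2_eq_square)

lemma infact_DD: "infact A z = \<i> * DD A z"
  unfolding DD_def tangent_to_F2_def by simp

lemma u_lin: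
  "u1 (a *\<^sub>R A + b *\<^sub>R B) = a * u1 A + b * u1 B"
  "u2 (a *\<^sub>R A + b *\<^sub>R B) = a * u2 A + b * u2 B"
  "u3 (a *\<^sub>R A + b *\<^sub>R B) = a * u3 A + b * u3 B"
  by (simp_all add: u1_def u2_def u3_def algebra_simps)

lemma DD_circle:
  assumes "cmod z = 1"
  shows "DD A z / z = - of_real (u1 A + u2 A * Re z + u3 A * Im z)"
proof -
  have z0: "z \<noteq> 0" using assms by auto
  obtain x y where z: "z = Complex x y" by (cases z)
  have zz: "x * x + y * y = 1" using assms z by (simp add: cmod_def power2_eq_square)
  have "DD A z = - of_real (u1 A + u2 A * Re z + u3 A * Im z) * z"
    unfolding DD_formula z
    by (simp add: complex_eq_iff power2_eq_square Complex_eq) (use zz in algebra)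
  then show ?thesis using z0 by simp
qed

lemma DD_in_ker: "DD A \<in> ker_dbar2"
proof -
  have e: "DD A = (\<lambda>z. -(of_real (u1 A) * z + (of_real (u2 A) + \<i> * of_real (u3 A))/2
   + (of_real (u2 A) - \<i> * of_real (u3 A)) * z^2 / 2))"
    by (rule ext) (rule DD_formula)
  show ?thesis unfolding ker_dbar2_def
  proof (intro CollectI conjI allI impI)
    show "continuous_on (cball 0 1) (DD A)" unfolding e by (intro continuous_intros) auto
    show "DD A holomorphic_on ball 0 1" unfolding e by (intro holomorphic_intros) auto
    fix z :: complex assume "cmod z = 1"
    then show "DD A z / z \<in> \<real>" by (simp add: DD_circle)
  qed
qed

lemma DD_linear: "DD (a *\<^sub>R A + b *\<^sub>R B) z = a *\<^sub>R DD A z + b *\<^sub>R DD B z"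
  unfolding DD_formula u_lin
  by (simp add: scaleR_conv_of_real field_simps)

lemma psl2_trace: "A \<in> psl2 \<Longrightarrow> A$2$2 = - A$1$1"
  unfolding psl2_def trace_def by (simp add: sum_2)

lemma psl2_eq:
  assumes "A \<in> psl2" "B \<in> psl2" "u1 A = u1 B" "u2 A = u2 B" "u3 A = u3 B"
  shows "A = B"
proof -
  have t: "A$2$2 = - A$1$1" "B$2$2 = - B$1$1" using assms psl2_trace by auto
  have "A$i$j = B$i$j" for i j
    using assms(3-5) t unfolding u1_def u2_def u3_def
    using exhaust_2[of i] exhaust_2[of j] by auto
  then show ?thesis by (simp add: vec_eq_iff)
qed

lemma DD_inj:
  assumes "A \<in> psl2" "B \<in> psl2" "\<forall>z\<in>cball 0 1. DD A z = DD B z"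
  shows "A = B"
proof -
  have "DD A 0 = DD B 0" "DD A 1 = DD B 1" using assms(3) by auto
  then have h: "(of_real (u2 A) + \<i> * of_real (u3 A)) = (of_real (u2 B) + \<i> * of_real (u3 B))"
     "of_real (u1 A) + of_real (u2 A) = (of_real (u1 B) + of_real (u2 B) :: complex)"
    unfolding DD_formula by (simp_all add: field_simps complex_eq_iff)
  then have "u2 A = u2 B" "u3 A = u3 B" by (simp_all add: complex_eq_iff)
  moreover then have "u1 A = u1 B" using h(2) by (simp add: complex_eq_iff)
  ultimately show ?thesis using psl2_eq assms by blast
qed



lemma open_subset_Reals_empty:
  assumes "open U" "U \<subseteq> (\<real>::complex set)" shows "U = {}"
proof (rule ccontr)
  assume "U \<noteq> {}"
  then obtain w where w: "w \<in> U" by auto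
  then obtain e where e: "e > 0" "ball w e \<subseteq> U" using assms(1) open_contains_ball by blast
  have "w + \<i> * of_real (e/2) \<in> ball w e" using e by (simp add: dist_norm norm_mult)
  then have "w + \<i> * of_real (e/2) \<in> \<real>" using e assms(2) by auto
  moreover have "w \<in> \<real>" using w assms(2) by auto
  ultimately show False using e by (auto simp: complex_is_Real_iff)
qed

lemma real_holo_const:
  assumes hol: "k holomorphic_on ball 0 1" and re: "\<And>z. z \<in> ball 0 1 \<Longrightarrow> Im (k z) = 0"
  shows "k constant_on ball (0::complex) 1"
proof (rule ccontr)
  assume nc: "\<not> k constant_on ball 0 1"
  have "open (k ` ball 0 1)"
    by (rule open_mapping_thm[OF hol open_ball connected_ball open_ball order_refl nc])
  moreover have "k ` ball 0 1 \<subseteq> \<real>" using re by (auto simp: complex_is_Real_iff)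
  ultimately have "k ` ball 0 1 = {}" by (rule open_subset_Reals_empty)
  then show False by simp
qed



lemma ker_classify:
  assumes xi: "\<xi> \<in> ker_dbar2"
  shows "\<exists>r::real. \<forall>z\<in>cball 0 1. \<xi> z = \<xi> 0 + of_real r * z + cnj (\<xi> 0) * z^2"
proof -
  let ?c = "\<xi> 0"
  have contxi: "continuous_on (cball 0 1) \<xi>" and holxi: "\<xi> holomorphic_on ball 0 1"
    and circ: "\<And>z. cmod z = 1 \<Longrightarrow> \<xi> z / z \<in> \<real>"
    using xi by (auto simp: ker_dbar2_def)
  define g where "g z = \<xi> z - ?c - cnj ?c * z^2" for z
  have contg: "continuous_on (cball 0 1) g" unfolding g_def by (intro continuous_intros contxi)
  have holg: "g holomorphic_on ball 0 1" unfolding g_def by (intro holomorphic_intros holxi)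
  have g0: "g 0 = 0" by (simp add: g_def)
  have gcirc: "Im (g z / z) = 0" if z1: "cmod z = 1" for z
  proof -
    have dz: "w / z = w * cnj z" for w
      by (subst complex_div_cnj) (simp add: z1)
    have h1: "Im (\<xi> z * cnj z) = 0" using circ[OF z1] by (simp add: complex_is_Real_iff dz)
    have e: "g z * cnj z = \<xi> z * cnj z - (?c + cnj ?c * z^2) * cnj z"
      by (simp add: g_def algebra_simps)
    obtain x y where z: "z = Complex x y" by (cases z)
    obtain a b where c: "?c = Complex a b" by (cases "?c")
    have zz: "x * x + y * y = 1" using z1 z by (simp add: cmod_def power2_eq_square)
    have "Im ((?c + cnj ?c * z^2) * cnj z) = 0"
      unfolding c z by (simp add: power2_eq_square) (use zz in algebra)
    then show ?thesis unfolding dz e using h1 by simp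
  qed
  define k where "k z = (if z = 0 then deriv g 0 else (g z - g 0) / (z - 0))" for z
  have holk: "k holomorphic_on ball 0 1"
    unfolding k_def by (rule pole_lemma[OF holg]) simp
  have kz: "z \<noteq> 0 \<Longrightarrow> k z = g z / z" for z by (simp add: k_def g0)
  have gk: "g z = z * k z" for z
    by (cases "z = 0") (simp_all add: g0 kz)
  have contk: "continuous_on (cball 0 1) k"
    unfolding continuous_on_eq_continuous_within
  proof
    fix x :: complex assume x: "x \<in> cball 0 1"
    show "continuous (at x within cball 0 1) k"
    proof (cases "x \<in> ball 0 1")
      case True
      have "continuous_on (ball 0 1) k" by (rule holomorphic_on_imp_continuous_on[OF holk])
      then have "isCont k x" using True by (simp add: continuous_on_eq_continuous_at)
      then show ?thesis by (rule continuous_at_imp_continuous_within)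
    next
      case False
      then have x1: "cmod x = 1" using x by auto
      then have x0: "x \<noteq> 0" by auto
      have cgz: "continuous (at x within cball 0 1) (\<lambda>z. g z / z)"
        using contg x x0
        by (intro continuous_intros) (auto simp: continuous_on_eq_continuous_within)
      have eqk: "\<forall>x'\<in>cball 0 1. dist x' x < 1 \<longrightarrow> k x' = g x' / x'"
      proof (intro ballI impI)
        fix x' :: complex assume "dist x' x < 1"
        then have "x' \<noteq> 0" using x1 by (auto simp: dist_norm)
        then show "k x' = g x' / x'" by (rule kz)
      qed
      show ?thesis
        by (rule continuous_transform_within[OF cgz zero_less_one x]) (use eqk in auto)
    qed
  qed
  have kcirc: "Im (k z) = 0" if "cmod z = 1" for z
  proof -
    have "z \<noteq> 0" using that by auto
    then show ?thesis using gcirc[OF that] kz[of z] by simp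
  qed
  have imle: "Re (\<i> * k z) \<le> 0" if "z \<in> cball 0 1" for z
  proof (rule maximum_real_frontier[of "\<lambda>z. \<i> * k z" "cball 0 1"])
    show "(\<lambda>z. \<i> * k z) holomorphic_on interior (cball 0 1)"
      by (simp, intro holomorphic_intros holk)
    show "continuous_on (closure (cball 0 1)) (\<lambda>z. \<i> * k z)"
      by (simp, intro continuous_intros contk)
  qed (use that kcirc in auto)
  have imge: "Re (- \<i> * k z) \<le> 0" if "z \<in> cball 0 1" for z
  proof (rule maximum_real_frontier[of "\<lambda>z. - \<i> * k z" "cball 0 1"])
    show "(\<lambda>z. - \<i> * k z) holomorphic_on interior (cball 0 1)"
      by (simp, intro holomorphic_intros holk)
    show "continuous_on (closure (cball 0 1)) (\<lambda>z. - \<i> * k z)"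
      by (simp, intro continuous_intros contk)
  qed (use that kcirc in auto)
  have kreal: "Im (k z) = 0" if "z \<in> cball 0 1" for z
    using imle[OF that] imge[OF that] by simp
  have "k constant_on ball 0 1"
    by (rule real_holo_const[OF holk]) (use kreal in auto)
  then obtain c where c: "\<And>z. z \<in> ball 0 1 \<Longrightarrow> k z = c" by (auto simp: constant_on_def)
  have "k ` closure (ball 0 1) \<subseteq> {c}"
    by (rule image_closure_subset) (use contk c in auto)
  then have kc_sub: "k ` cball 0 1 \<subseteq> {c}" by simp
  then have kc: "\<And>z. z \<in> cball 0 1 \<Longrightarrow> k z = c" by blast
  have "Im c = 0" using kreal[of 0] kc[of 0] by simp
  then have cr: "c = of_real (Re c)" by (simp add: complex_eq_iff)
  show ?thesis
  proof (intro exI ballI)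
    fix z :: complex assume z: "z \<in> cball 0 1"
    have "\<xi> z = ?c + cnj ?c * z^2 + g z" by (simp add: g_def)
    also have "\<dots> = ?c + cnj ?c * z^2 + z * c" using gk kc[OF z] by simp
    also have "z * c = of_real (Re c) * z" by (metis cr mult.commute)
    finally show "\<xi> z = ?c + of_real (Re c) * z + cnj ?c * z^2"
      by (simp only: ac_simps)
  qed
qed


lemma DD_surj:
  assumes xi: "\<xi> \<in> ker_dbar2"
  shows "\<exists>A\<in>psl2. \<forall>z\<in>cball 0 1. DD A z = \<xi> z"
proof -
  obtain r where r: "\<forall>z\<in>cball 0 1. \<xi> z = \<xi> 0 + of_real r * z + cnj (\<xi> 0) * z^2"
    using ker_classify[OF xi] by blast
  define x where "x = Re (\<xi> 0)"
  define y where "y = Im (\<xi> 0)"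
  define A :: mat2 where "A = vector [vector [- y, (r - 2 * x)/2], vector [(- r - 2 * x)/2, y]]"
  have A: "u1 A = - r" "u2 A = - 2 * x" "u3 A = - 2 * y"
    by (simp_all add: A_def u1_def u2_def u3_def field_simps)
  have "A \<in> psl2" by (simp add: psl2_def trace_def sum_2 A_def)
  moreover have "\<forall>z\<in>cball 0 1. DD A z = \<xi> z"
  proof
    fix z :: complex assume "z \<in> cball 0 1"
    then have "\<xi> z = \<xi> 0 + of_real r * z + cnj (\<xi> 0) * z^2" using r by blast
    moreover have "\<xi> 0 = Complex x y" by (simp add: x_def y_def)
    moreover have e1: "(of_real (- 2 * x) + \<i> * of_real (- 2 * y)) / 2 = - Complex x y"
      by (simp add: complex_eq_iff)
    moreover have e2: "(of_real (- 2 * x) - \<i> * of_real (- 2 * y)) * z^2 / 2 = - (cnj (Complex x y) * z^2)"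
    proof -
      have "(of_real (- 2 * x) - \<i> * of_real (- 2 * y)) / 2 = - cnj (Complex x y)"
        by (simp add: complex_eq_iff)
      then show ?thesis by (metis mult_minus_left times_divide_eq_left mult.commute)
    qed
    ultimately show "DD A z = \<xi> z"
      unfolding DD_formula A by (simp only:) (simp add: algebra_simps)
  qed
  ultimately show ?thesis by blast
qed



lemma det3_mult_neg:
  fixes a b c :: "nat \<Rightarrow> real" and L :: "nat \<Rightarrow> nat \<Rightarrow> real"
  shows "det3 (\<lambda>k j. -(a j * L k 0 + b j * L k 1 + c j * L k 2)) =
    - det3 L * det3 (\<lambda>l j. if l = 0 then a j else if l = 1 then b j else c j)"
  unfolding det3_def by simp algebra

lemma half_angle_id:
  fixes u v :: real
  shows "sin (2 * v) - sin (2 * u + 2 * v) + sin (2 * u) = 4 * sin u * sin v * sin (u + v)"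
proof -
  have su: "sin u ^ 2 + cos u ^ 2 = 1" by (rule sin_cos_squared_add)
  have sv: "sin v ^ 2 + cos v ^ 2 = 1" by (rule sin_cos_squared_add)
  have e: "sin (2 * u + 2 * v) = sin (2 * u) * cos (2 * v) + cos (2 * u) * sin (2 * v)"
    by (rule sin_add)
  show ?thesis
    unfolding e sin_double cos_double sin_add using su sv by algebra
qed

lemma detV_pos:
  assumes "0 < s1" "s1 < s2" "s2 < 2 * pi"
  shows "0 < det3 (\<lambda>k l. if l = 0 then 1 else if l = 1 then Re (if k = 0 then cis \<theta> else if k = 1 then cis (\<theta> + s1) else cis (\<theta> + s2))
                     else Im (if k = 0 then cis \<theta> else if k = 1 then cis (\<theta> + s1) else cis (\<theta> + s2)))"
proof -
  have "det3 (\<lambda>k l. if l = 0 then 1 else if l = 1 then Re (if k = 0 then cis \<theta> else if k = 1 then cis (\<theta> + s1) else cis (\<theta> + s2))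
                     else Im (if k = 0 then cis \<theta> else if k = 1 then cis (\<theta> + s1) else cis (\<theta> + s2)))
     = sin ((\<theta> + s2) - (\<theta> + s1)) - sin ((\<theta> + s2) - \<theta>) + sin ((\<theta> + s1) - \<theta>)"
    unfolding det3_def sin_diff[of "\<theta> + s2"] sin_diff[of "\<theta> + s1"] by simp algebra
  also have "\<dots> = sin (2 * ((s2 - s1)/2)) - sin (2 * (s1/2) + 2 * ((s2 - s1)/2)) + sin (2 * (s1/2))"
  proof -
    have h: "2 * ((s2 - s1)/2) = s2 - s1" "2 * (s1/2) + 2 * ((s2 - s1)/2) = s2" "2 * (s1/2) = s1"
      by (simp_all add: field_simps)
    show ?thesis by (simp only: h) simp
  qed
  also have "\<dots> = 4 * sin (s1/2) * sin ((s2 - s1)/2) * sin (s1/2 + (s2 - s1)/2)"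
    by (rule half_angle_id)
  also have "0 < \<dots>"
    using assms by (intro mult_pos_pos sin_gt_zero) (auto simp: field_simps)
  finally show ?thesis .
qed

lemma detL_pos:
  fixes x y qx qy :: real
  assumes q: "qx^2 + qy^2 = 1" and p: "x^2 + y^2 < 1"
  shows "0 < det3 (\<lambda>k l. if k = 0 then (if l = 0 then x else if l = 1 then (1 + x^2 - y^2)/2 else x * y)
                     else if k = 1 then (if l = 0 then y else if l = 1 then x * y else (1 - x^2 + y^2)/2)
                     else (if l = 0 then 1 else if l = 1 then qx else qy))"
proof -
  have "det3 (\<lambda>k l. if k = 0 then (if l = 0 then x else if l = 1 then (1 + x^2 - y^2)/2 else x * y)
                     else if k = 1 then (if l = 0 then y else if l = 1 then x * y else (1 - x^2 + y^2)/2)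
                     else (if l = 0 then 1 else if l = 1 then qx else qy))
      = (1 - x^2 - y^2) * ((qx - x)^2 + (qy - y)^2) / 4"
    unfolding det3_def using q by (simp add: power2_eq_square field_simps) algebra
  also have "0 < \<dots>"
  proof -
    have "0 < 1 - x^2 - y^2" using p by simp
    moreover have "(qx - x)^2 + (qy - y)^2 > 0"
    proof (rule ccontr)
      assume "\<not> (qx - x)^2 + (qy - y)^2 > 0"
      then have "(qx - x)^2 + (qy - y)^2 = 0" by (smt (verit) zero_le_power2)
      then have "qx = x" "qy = y" by (simp_all add: sum_power2_eq_zero_iff)
      then show False using p q by simp
    qed
    ultimately show ?thesis by simp
  qed
  finally show ?thesis .
qed



lemma u_lin3:
  "u1 (a *\<^sub>R A + b *\<^sub>R B + c *\<^sub>R C) = a * u1 A + b * u1 B + c * u1 C"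
  "u2 (a *\<^sub>R A + b *\<^sub>R B + c *\<^sub>R C) = a * u2 A + b * u2 B + c * u2 C"
  "u3 (a *\<^sub>R A + b *\<^sub>R B + c *\<^sub>R C) = a * u3 A + b * u3 B + c * u3 C"
  by (simp_all add: u1_def u2_def u3_def algebra_simps)

lemma detU_nz:
  assumes ps: "A0 \<in> psl2" "A1 \<in> psl2" "A2 \<in> psl2" and d: "A0 \<noteq> A1" "A0 \<noteq> A2" "A1 \<noteq> A2"
    and ind: "independent {A0, A1, A2}"
  shows "det3 (\<lambda>l j. if l = 0 then u1 (if j = 0 then A0 else if j = 1 then A1 else A2)
                 else if l = 1 then u2 (if j = 0 then A0 else if j = 1 then A1 else A2)
                 else u3 (if j = 0 then A0 else if j = 1 then A1 else A2)) \<noteq> 0"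
    (is "det3 ?U \<noteq> 0")
proof
  assume z: "det3 ?U = 0"
  define Um :: "real^3^3" where "Um = vector [vector [u1 A0, u1 A1, u1 A2], vector [u2 A0, u2 A1, u2 A2], vector [u3 A0, u3 A1, u3 A2]]"
  have "det Um = det3 ?U"
    unfolding det_3 Um_def det3_def by simp algebra
  then have "det (matrix (\<lambda>x. Um *v x)) = 0" using z by simp
  then have "\<not> inj (\<lambda>x. Um *v x)"
    using det_nz_iff_inj[of "\<lambda>x. Um *v x"] by simp
  then obtain v1 v2 where v: "v1 \<noteq> v2" "Um *v v1 = Um *v v2" by (auto simp: inj_def)
  define w where "w = v1 - v2"
  have w0: "w \<noteq> 0" using v by (simp add: w_def)
  have Uw: "Um *v w = 0" using v by (simp add: w_def matrix_vector_mult_diff_distrib)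
  have eqs: "w$1 * u1 A0 + w$2 * u1 A1 + w$3 * u1 A2 = 0"
            "w$1 * u2 A0 + w$2 * u2 A1 + w$3 * u2 A2 = 0"
            "w$1 * u3 A0 + w$2 * u3 A1 + w$3 * u3 A2 = 0"
    using arg_cong[OF Uw, of "\<lambda>v::real^3. v$1"] arg_cong[OF Uw, of "\<lambda>v::real^3. v$2"] arg_cong[OF Uw, of "\<lambda>v::real^3. v$3"]
    by (simp_all add: matrix_vector_mult_def sum_3 Um_def mult.commute)
  have wnz: "w$1 \<noteq> 0 \<or> w$2 \<noteq> 0 \<or> w$3 \<noteq> 0"
    using w0 by (auto simp: vec_eq_iff forall_3)
  define B where "B = w$1 *\<^sub>R A0 + w$2 *\<^sub>R A1 + w$3 *\<^sub>R A2"
  have Bp: "B \<in> psl2"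
    using psl2_trace[OF ps(1)] psl2_trace[OF ps(2)] psl2_trace[OF ps(3)]
    unfolding B_def psl2_def trace_def by (simp add: sum_2 algebra_simps)
  have zp: "(0::mat2) \<in> psl2" by (simp add: psl2_def trace_def)
  have "B = 0"
    by (rule psl2_eq[OF Bp zp]) (simp_all add: B_def u_lin3 eqs, simp_all add: u1_def u2_def u3_def)
  have "dependent {A0, A1, A2}"
    unfolding dependent_finite[OF finite.insertI[OF finite.insertI[OF finite.insertI[OF finite.emptyI]]]]
  proof (intro exI conjI)
    let ?u = "\<lambda>v. if v = A0 then w$1 else if v = A1 then w$2 else w$3"
    show "\<exists>v\<in>{A0, A1, A2}. ?u v \<noteq> 0" using wnz d by auto
    show "(\<Sum>v\<in>{A0, A1, A2}. ?u v *\<^sub>R v) = 0"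
      using d \<open>B = 0\<close> by (simp add: B_def add.assoc)
  qed
  then show False using ind by simp
qed



lemma infact_circle:
  assumes "cmod z = 1"
  shows "Im (infact A z / z) = -(u1 A * 1 + u2 A * Re z + u3 A * Im z)"
proof -
  have "infact A z / z = \<i> * (DD A z / z)" by (simp add: infact_DD)
  then show ?thesis using DD_circle[OF assms, of A] by simp
qed

lemma DD_bd:
  assumes "cmod z = 1"
  shows "Re (DD A z / z) = -(u1 A * 1 + u2 A * Re z + u3 A * Im z)"
  using DD_circle[OF assms, of A] by simp

lemma DD_Re: "Re (DD A p) = -(u1 A * Re p + u2 A * ((1 + Re p^2 - Im p^2)/2) + u3 A * (Re p * Im p))"
  unfolding DD_formula by (simp add: power2_eq_square field_simps)

lemma DD_Im: "Im (DD A p) = -(u1 A * Im p + u2 A * (Re p * Im p) + u3 A * ((1 - Re p^2 + Im p^2)/2))"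
  unfolding DD_formula by (simp add: power2_eq_square field_simps)



lemma orient:
  assumes ac: "anticlockwise3 z0 z1 z2" and p: "p \<in> ball 0 1" and q: "cmod q = 1"
    and ps: "A0 \<in> psl2" "A1 \<in> psl2" "A2 \<in> psl2" and d: "A0 \<noteq> A1" "A0 \<noteq> A2" "A1 \<noteq> A2"
    and ind: "independent {A0, A1, A2}"
  shows "psl_pos z0 z1 z2 A0 A1 A2 \<longleftrightarrow> \<not> ker_pos p q (DD A0) (DD A1) (DD A2)"
proof -
  obtain \<theta> s1 s2 where s: "0 < s1" "s1 < s2" "s2 < 2 * pi"
    and zs: "z0 = cis \<theta>" "z1 = cis (\<theta> + s1)" "z2 = cis (\<theta> + s2)"
    using ac unfolding anticlockwise3_def by blast
  define Af where "Af = (\<lambda>j::nat. if j = 0 then A0 else if j = 1 then A1 else A2)"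
  define zf where "zf = (\<lambda>k::nat. if k = 0 then z0 else if k = 1 then z1 else z2)"
  define a where "a = (\<lambda>j. u1 (Af j))"
  define b where "b = (\<lambda>j. u2 (Af j))"
  define c where "c = (\<lambda>j. u3 (Af j))"
  define detU where "detU = det3 (\<lambda>l j. if l = 0 then a j else if l = 1 then b j else c j)"
  have dU: "detU \<noteq> 0"
    unfolding detU_def a_def b_def c_def Af_def by (rule detU_nz[OF ps d ind])
  define V where "V = (\<lambda>(k::nat) (l::nat). if l = 0 then 1 else if l = 1 then Re (zf k) else Im (zf k))"
  have Vpos: "0 < det3 V"
    unfolding V_def zf_def zs by (rule detV_pos[OF s])
  have zf1: "cmod (zf k) = 1" for k unfolding zf_def zs by simp
  have P: "(\<lambda>k j. Im (infact (Af j) (zf k) / zf k)) = (\<lambda>k j. -(a j * V k 0 + b j * V k 1 + c j * V k 2))"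
    by (intro ext) (simp add: infact_circle[OF zf1] a_def b_def c_def V_def)
  have "psl_pos z0 z1 z2 A0 A1 A2 \<longleftrightarrow> det3 (\<lambda>k j. Im (infact (Af j) (zf k) / zf k)) < 0"
    unfolding psl_pos_def Let_def Af_def zf_def by (rule refl)
  also have "\<dots> \<longleftrightarrow> - det3 V * detU < 0"
    unfolding P det3_mult_neg detU_def by (rule refl)
  also have "\<dots> \<longleftrightarrow> 0 < detU"
    using Vpos by (simp add: zero_less_mult_iff)
  finally have L1: "psl_pos z0 z1 z2 A0 A1 A2 \<longleftrightarrow> 0 < detU" .
  define x where "x = Re p"
  define y where "y = Im p"
  define L where "L = (\<lambda>(k::nat) (l::nat). if k = 0 then (if l = 0 then x else if l = 1 then (1 + x^2 - y^2)/2 else x * y)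
                     else if k = 1 then (if l = 0 then y else if l = 1 then x * y else (1 - x^2 + y^2)/2)
                     else (if l = 0 then 1 else if l = 1 then Re q else Im q))"
  have qq: "Re q ^ 2 + Im q ^ 2 = 1" using q by (simp add: cmod_def)
  have pp: "x^2 + y^2 < 1" using p by (simp add: x_def y_def cmod_def dist_norm real_sqrt_less_iff)
  have Lpos: "0 < det3 L" unfolding L_def by (rule detL_pos[OF qq pp])
  have K: "(\<lambda>k j. if k = 0 then Re ((if j = 0 then DD A0 else if j = 1 then DD A1 else DD A2) p)
                 else if k = 1 then Im ((if j = 0 then DD A0 else if j = 1 then DD A1 else DD A2) p)
                 else Re ((if j = 0 then DD A0 else if j = 1 then DD A1 else DD A2) q / q))
        = (\<lambda>k j. -(a j * L k 0 + b j * L k 1 + c j * L k 2))"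
    by (intro ext) (simp add: L_def a_def b_def c_def Af_def DD_Re DD_Im DD_bd[OF q] x_def y_def)
  have "ker_pos p q (DD A0) (DD A1) (DD A2) \<longleftrightarrow> det3 (\<lambda>k j. -(a j * L k 0 + b j * L k 1 + c j * L k 2)) > 0"
    unfolding ker_pos_def Let_def K by (rule refl)
  also have "\<dots> \<longleftrightarrow> - det3 L * detU > 0"
    unfolding det3_mult_neg detU_def by (rule refl)
  also have "\<dots> \<longleftrightarrow> detU < 0"
    using Lpos by (simp add: mult_less_0_iff)
  finally have L2: "ker_pos p q (DD A0) (DD A1) (DD A2) \<longleftrightarrow> detU < 0" .
  show ?thesis using L1 L2 dU by auto
qed

theorem lemma5p35:
  shows "(\<forall>A\<in>psl2. DD A \<in> ker_dbar2)
    \<and> (\<forall>A\<in>psl2. \<forall>B\<in>psl2. \<forall>a b. \<forall>z\<in>cball 0 1.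
          DD (a *\<^sub>R A + b *\<^sub>R B) z = a *\<^sub>R DD A z + b *\<^sub>R DD B z)
    \<and> (\<forall>A\<in>psl2. \<forall>B\<in>psl2. (\<forall>z\<in>cball 0 1. DD A z = DD B z) \<longrightarrow> A = B)
    \<and> (\<forall>\<xi>\<in>ker_dbar2. \<exists>A\<in>psl2. \<forall>z\<in>cball 0 1. DD A z = \<xi> z)
    \<and> (\<forall>z0 z1 z2 p q A0 A1 A2.
          anticlockwise3 z0 z1 z2 \<and> p \<in> ball 0 1 \<and> cmod q = 1 \<and>
          A0 \<in> psl2 \<and> A1 \<in> psl2 \<and> A2 \<in> psl2 \<and>
          A0 \<noteq> A1 \<and> A0 \<noteq> A2 \<and> A1 \<noteq> A2 \<and> independent {A0, A1, A2}
          \<longrightarrow> (psl_pos z0 z1 z2 A0 A1 A2 \<longleftrightarrow> \<not> ker_pos p q (DD A0) (DD A1) (DD A2)))"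
  using DD_in_ker DD_linear DD_inj DD_surj orient by blast

end
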